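(* Fix $c_0>0$, $\alpha_0\in(0,1/2)$, $\nu_2>0$ and $\sigma_1>0$. For every $t>0$ and every $\theta\in(-c_0,c_0)$, $$\omega\{\theta,\sigma_1,\nu_2,t,c(t,\nu_2)\}\;\le\;\omega\{\theta,\sigma_1,\nu_2,0,c(0)\}.$$ That is, among all tests with rejection region $\{t\widehat\sigma_1-c<\widehat\theta<c-t\widehat\sigma_1\}$ whose size (rejection probability at $\theta=c_0$) equals $\alpha_0$, the one with $t=0$ (rejection region $|\widehat\theta|<c(0)$) has the largest power at every $\theta\in(-c_0,c_0)$.
   Context: Univariate setting. Let $\sigma_1>0$, $\nu_2>0$. For $\theta\in\mathbb R$, $s>0$, $t\ge 0$, $c>0$, define the rejection probability $$\omega(\theta,s,\nu_2,t,c)=\Pr\big(t\widehat\sigma_1-c<\widehat\theta<c-t\widehat\sigma_1\big),$$ computed when $\widehat\theta\sim\mathcal N(\theta,s^2)$ and $\widehat\sigma_1>0$ are independent with $\nu_2\widehat\sigma_1^2/s^2\sim\chi^2_{\nu_2}$. In particular $\omega(\theta,s,\nu_2,0,c)=\Phi\big((c-\theta)/s\big)-\Phi\big((-c-\theta)/s\big)$, with $\Phi$ the standard normal CDF. For each fixed $t\ge0$, the map $c\mapsto\omega(c_0,s,\nu_2,t,c)$ is strictly increasing on $(0,\infty)$, tends to $0$ as $c\to0$ and to $1$ as $c\to\infty$. Denote by $c(t,\nu_2)$ the unique $c>0$ with $\omega(c_0,\sigma_1,\nu_2,t,c)=\alpha_0$, and write $c(0)=c(0,\nu_2)$ for the case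 $t=0$. *)

theory Defs
  imports "HOL-Probability.Probability"
begin

definition chi2_density :: "real \<Rightarrow> real \<Rightarrow> real" where
  "chi2_density nu w =
     (if w > 0 then w powr (nu / 2 - 1) * exp (- w / 2) / (2 powr (nu / 2) * Gamma (nu / 2))
      else 0)"

text \<open>Rejection probability omega(theta, s, nu, t, c) = Pr(t*sh - c < th < c - t*sh), where
  th ~ N(theta, s^2) and W = nu * sh^2 / s^2 ~ chi^2_nu are independent, i.e.
  sh = s * sqrt (W / nu).\<close>
definition omega :: "real \<Rightarrow> real \<Rightarrow> real \<Rightarrow> real \<Rightarrow> real \<Rightarrow> real" where
  "omega theta s nu t c =
     measure (density (lborel \<Otimes>\<^sub>M lborel)
                (\<lambda>(x, w). ennreal (normal_density theta s x * chi2_density nu w)))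
       {(x, w). w > 0 \<and> t * (s * sqrt (w / nu)) - c < x \<and> x < c - t * (s * sqrt (w / nu))}"

definition crit :: "real \<Rightarrow> real \<Rightarrow> real \<Rightarrow> real \<Rightarrow> real \<Rightarrow> real" where
  "crit c0 sigma1 alpha0 nu2 t = (THE c. c > 0 \<and> omega c0 sigma1 nu2 t c = alpha0)"

end

theory Submission
  imports Defs
begin


lemma chi2_nonneg: "nu > 0 \<Longrightarrow> chi2_density nu w \<ge> 0"
  unfolding chi2_density_def by (auto intro!: divide_nonneg_pos mult_pos_pos Gamma_real_pos)

lemma chi2_meas[measurable]: "chi2_density nu \<in> borel_measurable borel"
  unfolding chi2_density_def[abs_def] by measurable

lemma chi2_int: assumes nu: "nu > 0"
  shows "(\<integral>\<^sup>+w. ennreal (chi2_density nu w) \<partial>lborel) = 1"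
proof -
  define s where "s = nu/2"
  have s: "s > 0" using nu by (simp add: s_def)
  have G: "Gamma s > 0" using s by (simp add: Gamma_real_pos)
  have "(\<integral>\<^sup>+w. ennreal (chi2_density nu w) \<partial>lborel)
     = 2 * (\<integral>\<^sup>+x. ennreal (chi2_density nu (0 + 2 * x)) \<partial>lborel)"
    by (subst nn_integral_real_affine[where c=2 and t=0]) auto
  also have "\<dots> = 2 * (\<integral>\<^sup>+x. ennreal (indicator {0..} x * x powr (s - 1) / exp x) * ennreal (1 / (2 * Gamma s)) \<partial>lborel)"
  proof -
    have "ennreal (chi2_density nu (0 + 2 * x)) = ennreal (indicator {0..} x * x powr (s - 1) / exp x) * ennreal (1 / (2 * Gamma s))" for x
    proof (cases "x > 0")
      case True
      have e: "exp (- (2 * x) / 2) = 1 / exp x" by (simp add: exp_minus field_simps)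
      have p: "(2 * x) powr (s - 1) = 2 powr s / 2 * x powr (s - 1)"
        using True by (simp add: powr_mult powr_diff)
      have "chi2_density nu (0 + 2 * x) = (2 * x) powr (s - 1) * exp (- (2 * x) / 2) / (2 powr s * Gamma s)"
        using True unfolding chi2_density_def s_def by simp
      also have "\<dots> = x powr (s - 1) / exp x * (1 / (2 * Gamma s))"
        unfolding e p using G by (simp add: field_simps powr_diff)
      finally have "chi2_density nu (0 + 2 * x) = x powr (s - 1) / exp x * (1 / (2 * Gamma s))" .
      then show ?thesis using True G by (simp add: ennreal_mult[symmetric])
    next
      case False
      then show ?thesis by (auto simp: chi2_density_def indicator_def)
    qed
    then show ?thesis by simp
  qed
  also have "\<dots> = 2 * ((\<integral>\<^sup>+x. ennreal (indicator {0..} x * x powr (s - 1) / exp x) \<partial>lborel) * ennreal (1 / (2 * Gamma s)))"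
    by (subst nn_integral_multc) auto
  also have "\<dots> = 2 * (ennreal (Gamma s) * ennreal (1 / (2 * Gamma s)))"
    using Gamma_conv_nn_integral_real[OF s] by simp
  also have "\<dots> = ennreal 2 * ennreal (1/2)"
    using G by (simp add: ennreal_mult[symmetric])
  also have "\<dots> = ennreal (2 * (1/2))" by (rule ennreal_mult[symmetric]) simp_all
  also have "\<dots> = 1" by simp
  finally show ?thesis .
qed

definition "Nm mu s = density lborel (\<lambda>x. ennreal (normal_density mu s x))"
definition "Ch nu = density lborel (\<lambda>w. ennreal (chi2_density nu w))"
definition "Gf mu s a = measure (Nm mu s) {-a<..<a}"
definition "Rg s nu t c = {(x, w). w > 0 \<and> t * (s * sqrt (w / nu)) - c < x \<and> x < c - t * (s * sqrt (w / nu))}"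
definition "Hf mu s nu t c w = (if w > 0 then Gf mu s (c - t * (s * sqrt (w / nu))) else 0)"

lemma Nm_prob: "s > 0 \<Longrightarrow> prob_space (Nm mu s)"
  unfolding Nm_def by (rule prob_space_normal_density) simp

lemma Ch_prob: assumes "nu > 0" shows "prob_space (Ch nu)"
  unfolding Ch_def by (rule prob_spaceI) (simp add: emeasure_density chi2_int[OF assms])

lemma sets_Nm[simp, measurable_cong]: "sets (Nm mu s) = sets borel"
  by (simp add: Nm_def)
lemma sets_Ch[simp, measurable_cong]: "sets (Ch nu) = sets borel"
  by (simp add: Ch_def)
lemma space_Nm[simp]: "space (Nm mu s) = UNIV"
  by (simp add: Nm_def)
lemma space_Ch[simp]: "space (Ch nu) = UNIV"
  by (simp add: Ch_def)

lemma Gf_mono: assumes "s > 0" shows "mono (Gf mu s)"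
proof (rule monoI)
  fix a b :: real assume "a \<le> b"
  interpret prob_space "Nm mu s" by (rule Nm_prob[OF assms])
  show "Gf mu s a \<le> Gf mu s b" unfolding Gf_def
    by (rule finite_measure_mono) (use \<open>a \<le> b\<close> in auto)
qed

lemma Gf_meas[measurable]: "s > 0 \<Longrightarrow> Gf mu s \<in> borel_measurable borel"
  by (rule borel_measurable_mono[OF Gf_mono])

lemma Gf_nonpos: "a \<le> 0 \<Longrightarrow> Gf mu s a = 0"
  unfolding Gf_def by simp

lemma Gf_bounds: assumes "s > 0" shows "0 \<le> Gf mu s a" "Gf mu s a \<le> 1"
proof -
  interpret prob_space "Nm mu s" by (rule Nm_prob[OF assms])
  show "0 \<le> Gf mu s a" "Gf mu s a \<le> 1" unfolding Gf_def by auto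
qed

lemma Hf_meas[measurable]: "s > 0 \<Longrightarrow> Hf mu s nu t c \<in> borel_measurable borel"
  unfolding Hf_def[abs_def] by measurable

lemma Hf_bounds: assumes "s > 0" shows "0 \<le> Hf mu s nu t c w" "Hf mu s nu t c w \<le> 1"
  unfolding Hf_def using Gf_bounds[OF assms] by auto

lemma omega_prod: assumes nu: "nu > 0"
  shows "omega mu s nu t c = measure (Nm mu s \<Otimes>\<^sub>M Ch nu) (Rg s nu t c)"
proof -
  have sf: "sigma_finite_measure (density lborel (\<lambda>w. ennreal (chi2_density nu w)))"
    using prob_space_imp_sigma_finite[OF Ch_prob[OF nu]] by (simp add: Ch_def)
  have "density (lborel \<Otimes>\<^sub>M lborel) (\<lambda>(x, w). ennreal (normal_density mu s x * chi2_density nu w))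
     = density (lborel \<Otimes>\<^sub>M lborel) (\<lambda>(x, w). ennreal (normal_density mu s x) * ennreal (chi2_density nu w))"
    by (intro density_cong) (auto simp: ennreal_mult chi2_nonneg[OF nu] space_pair_measure)
  also have "\<dots> = Nm mu s \<Otimes>\<^sub>M Ch nu"
    unfolding Nm_def Ch_def
    by (rule pair_measure_density[symmetric]) (auto intro: sf lborel.sigma_finite_measure_axioms)
  finally show ?thesis unfolding omega_def Rg_def by simp
qed

lemma Rg_sets[measurable]: "Rg s nu t c \<in> sets (borel \<Otimes>\<^sub>M borel)"
proof -
  have "Rg s nu t c = {z \<in> space (borel \<Otimes>\<^sub>M borel). snd z > 0 \<and> t * (s * sqrt (snd z / nu)) - c < fst z \<and> fst z < c - t * (s * sqrt (snd z / nu))}"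
    by (auto simp: Rg_def space_pair_measure)
  also have "\<dots> \<in> sets (borel \<Otimes>\<^sub>M borel)" by measurable
  finally show ?thesis .
qed

lemma omega_int: assumes nu: "nu > 0" and s: "s > 0"
  shows "omega mu s nu t c = (\<integral>w. Hf mu s nu t c w \<partial>Ch nu)"
proof -
  interpret N: prob_space "Nm mu s" by (rule Nm_prob[OF s])
  interpret C: prob_space "Ch nu" by (rule Ch_prob[OF nu])
  interpret P: pair_sigma_finite "Nm mu s" "Ch nu" ..
  have R: "Rg s nu t c \<in> sets (Nm mu s \<Otimes>\<^sub>M Ch nu)"
  proof -
    have "sets (Nm mu s \<Otimes>\<^sub>M Ch nu) = sets (borel \<Otimes>\<^sub>M borel)"
      by (rule sets_pair_measure_cong) (simp_all only: sets_Nm sets_Ch)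
    then show ?thesis using Rg_sets by (simp only:)
  qed
  have sl: "emeasure (Nm mu s) ((\<lambda>x. (x, w)) -` Rg s nu t c) = ennreal (Hf mu s nu t c w)" for w
  proof (cases "w > 0")
    case True
    then have "(\<lambda>x. (x, w)) -` Rg s nu t c = {- (c - t * (s * sqrt (w / nu)))<..<c - t * (s * sqrt (w / nu))}"
      by (auto simp: Rg_def)
    then show ?thesis using True unfolding Hf_def Gf_def by (simp only: N.emeasure_eq_measure if_True)
  next
    case False
    then have "(\<lambda>x. (x, w)) -` Rg s nu t c = {}" by (auto simp: Rg_def)
    then show ?thesis using False by (simp add: Hf_def)
  qed
  have int: "integrable (Ch nu) (Hf mu s nu t c)"
  proof (rule C.integrable_const_bound[where B=1])
    show "AE w in Ch nu. norm (Hf mu s nu t c w) \<le> 1"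
      using Hf_bounds[OF s, of mu nu t c] by (intro AE_I2) simp
  qed (use s in measurable)
  have "emeasure (Nm mu s \<Otimes>\<^sub>M Ch nu) (Rg s nu t c) = (\<integral>\<^sup>+w. ennreal (Hf mu s nu t c w) \<partial>Ch nu)"
    using P.emeasure_pair_measure_alt2[OF R] sl by simp
  also have "\<dots> = ennreal (\<integral>w. Hf mu s nu t c w \<partial>Ch nu)"
    by (rule nn_integral_eq_integral[OF int]) (simp add: Hf_bounds[OF s])
  finally show ?thesis
    unfolding omega_prod[OF nu] measure_def
    by (simp add: Bochner_Integration.integral_nonneg Hf_bounds[OF s])
qed




lemma cosh_ineq:
  fixes x y a b :: real
  assumes "0 \<le> x" "x \<le> y" "\<bar>a\<bar> \<le> b"
  shows "cosh (y * a) * cosh (x * b) \<le> cosh (x * a) * cosh (y * b)"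
proof -
  have prod: "2 * (cosh u * cosh v) = cosh (u + v) + cosh (u - v)" for u v :: real
    by (simp add: cosh_add cosh_diff)
  have b0: "b \<ge> 0" using assms by linarith
  have m1: "(y - x) * (b - a) \<ge> 0" and m2: "(x + y) * (a + b) \<ge> 0"
    and m3: "(x + y) * (b - a) \<ge> 0" and m4: "(y - x) * (b + a) \<ge> 0"
    using assms by (auto intro!: mult_nonneg_nonneg)
  have c1: "cosh (y * a + x * b) \<le> cosh (x * a + y * b)"
  proof -
    have "\<bar>y * a + x * b\<bar> \<le> \<bar>x * a + y * b\<bar>"
      using m1 m2 by (simp add: abs_le_iff algebra_simps)
    then show ?thesis
      using cosh_real_nonneg_le_iff[of "\<bar>y * a + x * b\<bar>" "\<bar>x * a + y * b\<bar>"] by simp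
  qed
  have c2: "cosh (y * a - x * b) \<le> cosh (x * a - y * b)"
  proof -
    have "\<bar>y * a - x * b\<bar> \<le> \<bar>x * a - y * b\<bar>"
      using m3 m4 by (smt (verit) ring_class.ring_distribs left_diff_distrib)
    then show ?thesis
      using cosh_real_nonneg_le_iff[of "\<bar>y * a - x * b\<bar>" "\<bar>x * a - y * b\<bar>"] by simp
  qed
  have "2 * (cosh (y * a) * cosh (x * b)) \<le> 2 * (cosh (x * a) * cosh (y * b))"
    unfolding prod using c1 c2 by linarith
  then show ?thesis by simp
qed

definition "psi mu s x = normal_density mu s x + normal_density (- mu) s x"

lemma nd_refl: "normal_density mu s (- x) = normal_density (- mu) s x"
  unfolding normal_density_def by (simp add: power2_eq_square algebra_simps)

lemma psi_even: "psi mu s (- x) = psi mu s x"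
  unfolding psi_def nd_refl by simp

lemma expo_split: fixes x mu s :: real assumes s: "s > 0"
  shows "- (x - mu)\<^sup>2 / (2 * s\<^sup>2) = - (x\<^sup>2 + mu\<^sup>2) / (2 * s\<^sup>2) + x * (mu / s\<^sup>2)"
proof -
  have q: "2 * x * mu / (2 * s\<^sup>2) = x * (mu / s\<^sup>2)" using s by simp
  have "- (x - mu)\<^sup>2 = - (x\<^sup>2 + mu\<^sup>2) + 2 * x * mu" by (simp add: power2_eq_square algebra_simps)
  then show ?thesis using s by (simp add: field_simps)
qed

lemma K_sum: "(K::real) * (E * a) + K * (E * b) = (2 * K) * E * ((a + b) / 2)"
  by (simp add: field_simps)

lemma psi_closed: assumes s: "s > 0"
  shows "psi mu s x = 2 / sqrt (2 * pi * s\<^sup>2) * exp (- (x\<^sup>2 + mu\<^sup>2) / (2 * s\<^sup>2)) * cosh (x * (mu / s\<^sup>2))"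
proof -
  define E where "E = exp (- (x\<^sup>2 + mu\<^sup>2) / (2 * s\<^sup>2))"
  define z where "z = x * (mu / s\<^sup>2)"
  have e1: "exp (- (x - mu)\<^sup>2 / (2 * s\<^sup>2)) = E * exp z"
    unfolding E_def z_def expo_split[OF s, of x mu] exp_add ..
  have e2: "exp (- (x - - mu)\<^sup>2 / (2 * s\<^sup>2)) = E * exp (- z)"
  proof -
    have "exp (- (x - - mu)\<^sup>2 / (2 * s\<^sup>2)) = exp (- (x\<^sup>2 + (- mu)\<^sup>2) / (2 * s\<^sup>2) + x * (- mu / s\<^sup>2))"
      unfolding expo_split[OF s, of x "- mu"] ..
    also have "\<dots> = E * exp (- z)" unfolding E_def z_def exp_add by simp
    finally show ?thesis .
  qed
  have "psi mu s x = 1 / sqrt (2 * pi * s\<^sup>2) * (E * exp z) + 1 / sqrt (2 * pi * s\<^sup>2) * (E * exp (- z))"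
    unfolding psi_def normal_density_def e1 e2 ..
  also have "\<dots> = (2 * (1 / sqrt (2 * pi * s\<^sup>2))) * E * ((exp z + exp (- z)) / 2)"
    by (rule K_sum)
  also have "\<dots> = 2 / sqrt (2 * pi * s\<^sup>2) * E * cosh z"
    unfolding cosh_field_def by simp
  finally show ?thesis unfolding E_def z_def .
qed

lemma psi_pos: "s > 0 \<Longrightarrow> psi mu s x > 0"
  unfolding psi_def by (simp add: normal_density_pos add_pos_pos)

lemma psi_mono:
  assumes s: "s > 0" and xy: "0 \<le> x" "x \<le> y" and th: "\<bar>th\<bar> \<le> c"
  shows "psi th s y * psi c s x \<le> psi th s x * psi c s y"
proof -
  define C where "C = 2 / sqrt (2 * pi * s\<^sup>2)"
  define P where "P = C * C * exp (- (y\<^sup>2 + th\<^sup>2) / (2 * s\<^sup>2) + - (x\<^sup>2 + c\<^sup>2) / (2 * s\<^sup>2))"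
  have P2: "P = C * C * exp (- (x\<^sup>2 + th\<^sup>2) / (2 * s\<^sup>2) + - (y\<^sup>2 + c\<^sup>2) / (2 * s\<^sup>2))"
  proof -
    have "- (y\<^sup>2 + th\<^sup>2) / (2 * s\<^sup>2) + - (x\<^sup>2 + c\<^sup>2) / (2 * s\<^sup>2)
        = - (x\<^sup>2 + th\<^sup>2) / (2 * s\<^sup>2) + - (y\<^sup>2 + c\<^sup>2) / (2 * s\<^sup>2)"
      by (simp add: add_divide_distrib[symmetric])
    then show ?thesis unfolding P_def by simp
  qed
  have P0: "P \<ge> 0" unfolding P_def C_def by simp
  have ab: "\<bar>th / s\<^sup>2\<bar> \<le> c / s\<^sup>2" using th s by (simp add: divide_right_mono)
  have L: "psi th s y * psi c s x = P * (cosh (y * (th / s\<^sup>2)) * cosh (x * (c / s\<^sup>2)))"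
    unfolding psi_closed[OF s] P_def C_def[symmetric] exp_add by (simp only: ac_simps)
  have R: "psi th s x * psi c s y = P * (cosh (x * (th / s\<^sup>2)) * cosh (y * (c / s\<^sup>2)))"
    unfolding psi_closed[OF s] P2 C_def[symmetric] exp_add by (simp only: ac_simps)
  show ?thesis unfolding L R
    by (rule mult_left_mono[OF cosh_ineq[OF xy ab] P0])
qed



lemma Gf_int: assumes s: "s > 0"
  shows "Gf mu s a = (\<integral>x. normal_density mu s x * indicator {-a<..<a} x \<partial>lborel)"
proof -
  have "Gf mu s a = integral\<^sup>L (Nm mu s) (indicator {-a<..<a})" by (simp add: Gf_def)
  also have "\<dots> = (\<integral>x. normal_density mu s x *\<^sub>R indicator {-a<..<a} x \<partial>lborel)"
    unfolding Nm_def by (rule integral_density) auto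
  finally show ?thesis by simp
qed

lemma int_nd: "s > 0 \<Longrightarrow> A \<in> sets borel \<Longrightarrow> integrable lborel (\<lambda>x. normal_density mu s x * indicator A x)"
  by (rule integrable_real_mult_indicator) auto

lemma ind_sym: fixes a x :: real shows "indicator {-a<..<a} (- x) = (indicator {-a<..<a} x :: real)"
  by (auto simp: indicator_def)

lemma Gf_refl: assumes s: "s > 0" shows "Gf mu s a = Gf (- mu) s a"
proof -
  have "Gf mu s a = \<bar>- 1\<bar> *\<^sub>R (\<integral>x. normal_density mu s (0 + - 1 * x) * indicator {-a<..<a} (0 + - 1 * x) \<partial>lborel)"
    unfolding Gf_int[OF s] by (rule lborel_integral_real_affine) simp
  also have "\<dots> = Gf (- mu) s a"
    unfolding Gf_int[OF s] by (simp add: nd_refl ind_sym)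
  finally show ?thesis .
qed

lemma int_psi: "s > 0 \<Longrightarrow> A \<in> sets borel \<Longrightarrow> integrable lborel (\<lambda>x. psi mu s x * indicator A x)"
proof -
  assume s: "s > 0" and A: "A \<in> sets borel"
  have "integrable lborel (\<lambda>x. normal_density mu s x * indicator A x + normal_density (- mu) s x * indicator A x)"
    by (intro Bochner_Integration.integrable_add int_nd A s)
  then show ?thesis unfolding psi_def by (simp add: distrib_right)
qed

lemma Gf_psi: assumes s: "s > 0"
  shows "2 * Gf mu s a = (\<integral>x. psi mu s x * indicator {-a<..<a} x \<partial>lborel)"
proof -
  have "(\<integral>x. psi mu s x * indicator {-a<..<a} x \<partial>lborel)
     = (\<integral>x. normal_density mu s x * indicator {-a<..<a} x + normal_density (- mu) s x * indicator {-a<..<a} x \<partial>lborel)"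
    unfolding psi_def by (simp add: distrib_right)
  also have "\<dots> = Gf mu s a + Gf (- mu) s a"
    unfolding Gf_int[OF s] by (rule Bochner_Integration.integral_add) (auto intro: int_nd s)
  also have "\<dots> = 2 * Gf mu s a" using Gf_refl[OF s, of mu a] by simp
  finally show ?thesis by simp
qed

lemma psi_abs: "psi mu s \<bar>x\<bar> = psi mu s x"
  by (cases "x \<ge> 0") (auto simp: psi_even)

lemma F_le:
  assumes s: "s > 0" and th: "\<bar>th\<bar> \<le> c" and a0: "a0 \<ge> 0"
  shows "Gf th s a - psi th s a0 / psi c s a0 * Gf c s a \<le> Gf th s a0 - psi th s a0 / psi c s a0 * Gf c s a0"
proof -
  define k where "k = psi th s a0 / psi c s a0"
  define I where "I b x = (indicator {-b<..<b} (x::real) :: real)" for b x :: real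
  define D where "D x = psi th s x - k * psi c s x" for x
  have pc: "psi c s a0 > 0" using psi_pos[OF s] .
  have Dk: "D x * psi c s a0 = psi th s x * psi c s a0 - psi th s a0 * psi c s x" for x
    unfolding D_def k_def using pc by (simp add: field_simps)
  have sign: "D x * (I a x - I a0 x) \<le> 0" for x
  proof -
    have memb: "I b x = (if \<bar>x\<bar> < b then 1 else 0)" for b
      unfolding I_def by (auto simp: indicator_def)
    show ?thesis
    proof (cases "\<bar>x\<bar> < a0")
      case True
      have "psi th s a0 * psi c s \<bar>x\<bar> \<le> psi th s \<bar>x\<bar> * psi c s a0"
        by (rule psi_mono[OF s _ _ th]) (use True in auto)
      then have "D x * psi c s a0 \<ge> 0" unfolding Dk psi_abs by simp
      then have "D x \<ge> 0" using pc by (simp add: zero_le_mult_iff)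
      then show ?thesis using True unfolding memb by auto
    next
      case False
      have "psi th s \<bar>x\<bar> * psi c s a0 \<le> psi th s a0 * psi c s \<bar>x\<bar>"
        by (rule psi_mono[OF s a0 _ th]) (use False in auto)
      then have "D x * psi c s a0 \<le> 0" unfolding Dk psi_abs by simp
      then have "D x \<le> 0" using pc by (simp add: mult_le_0_iff)
      then show ?thesis using False unfolding memb by (auto simp: mult_le_0_iff)
    qed
  qed
  have intI: "integrable lborel (\<lambda>x. psi mu s x * I b x)" for mu b
    unfolding I_def by (rule int_psi[OF s]) simp
  have DI: "D x * I b x = psi th s x * I b x - k * (psi c s x * I b x)" for x b
    unfolding D_def by (simp add: algebra_simps)
  have intD: "integrable lborel (\<lambda>x. D x * I b x)" for b
    unfolding DI by (intro Bochner_Integration.integrable_diff integrable_mult_right intI)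
  have J: "(\<integral>x. D x * I b x \<partial>lborel) = 2 * Gf th s b - k * (2 * Gf c s b)" for b
  proof -
    have "(\<integral>x. D x * I b x \<partial>lborel) = (\<integral>x. psi th s x * I b x - k * (psi c s x * I b x) \<partial>lborel)"
      by (simp only: DI)
    also have "\<dots> = (\<integral>x. psi th s x * I b x \<partial>lborel) - k * (\<integral>x. psi c s x * I b x \<partial>lborel)"
      by (subst Bochner_Integration.integral_diff) (auto intro!: intI integrable_mult_right)
    also have "\<dots> = 2 * Gf th s b - k * (2 * Gf c s b)"
      unfolding I_def Gf_psi[OF s] ..
    finally show ?thesis .
  qed
  have "(\<integral>x. D x * (I a x - I a0 x) \<partial>lborel) = (\<integral>x. D x * I a x \<partial>lborel) - (\<integral>x. D x * I a0 x \<partial>lborel)"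
    unfolding right_diff_distrib by (rule Bochner_Integration.integral_diff[OF intD intD])
  moreover have "(\<integral>x. D x * (I a x - I a0 x) \<partial>lborel) \<le> 0"
  proof -
    have "0 \<le> (\<integral>x. - (D x * (I a x - I a0 x)) \<partial>lborel)"
      by (rule Bochner_Integration.integral_nonneg) (use sign in auto)
    then show ?thesis by simp
  qed
  ultimately have "2 * (Gf th s a - k * Gf c s a) \<le> 2 * (Gf th s a0 - k * Gf c s a0)"
    unfolding J by (simp add: algebra_simps)
  then show ?thesis unfolding k_def[symmetric] by simp
qed



lemma Gf_diff: assumes s: "s > 0"
  shows "Gf mu s b - Gf mu s a = (\<integral>x. normal_density mu s x * (indicator {-b<..<b} x - indicator {-a<..<a} x) \<partial>lborel)"
  unfolding Gf_int[OF s] right_diff_distrib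
  by (rule Bochner_Integration.integral_diff[symmetric]) (auto intro: int_nd s)

lemma nd_le: "s > 0 \<Longrightarrow> normal_density mu s x \<le> 1 / sqrt (2 * pi * s\<^sup>2)"
  unfolding normal_density_def by (rule mult_left_le) auto

lemma int_ind: fixes c :: real shows "c \<ge> 0 \<Longrightarrow> integrable lborel (indicator {-c<..<c} :: real \<Rightarrow> real)"
  by (intro integrable_real_indicator) auto

lemma ind_le: fixes a b x :: real
  shows "a \<le> b \<Longrightarrow> (indicator {-a<..<a} x :: real) \<le> indicator {-b<..<b} x"
  by (auto simp: indicator_def)

lemma Gf_lip0: assumes s: "s > 0" and ab: "0 \<le> a" "a \<le> b"
  shows "Gf mu s b - Gf mu s a \<le> 2 / sqrt (2 * pi * s\<^sup>2) * (b - a)"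
proof -
  define K where "K = 1 / sqrt (2 * pi * s\<^sup>2)"
  have "Gf mu s b - Gf mu s a \<le> (\<integral>x. K * (indicator {-b<..<b} x - indicator {-a<..<a} x) \<partial>lborel)"
    unfolding Gf_diff[OF s]
  proof (rule integral_mono)
    show "integrable lborel (\<lambda>x. normal_density mu s x * (indicator {- b<..<b} x - indicator {- a<..<a} x))"
      unfolding right_diff_distrib by (intro Bochner_Integration.integrable_diff int_nd s) auto
    show "integrable lborel (\<lambda>x. K * (indicator {- b<..<b} x - indicator {- a<..<a} x))"
      using ab by (intro integrable_mult_right Bochner_Integration.integrable_diff int_ind) auto
    fix x :: real
    show "normal_density mu s x * (indicator {- b<..<b} x - indicator {- a<..<a} x) \<le> K * (indicator {- b<..<b} x - indicator {- a<..<a} x)"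
      using nd_le[OF s, of mu x] ind_le[OF ab(2), of x] unfolding K_def
      by (intro mult_right_mono) auto
  qed
  also have "\<dots> = K * ((\<integral>x. indicator {-b<..<b} x \<partial>lborel) - (\<integral>x. indicator {-a<..<a} x \<partial>lborel))"
    using ab by (simp only: integral_mult_right_zero Bochner_Integration.integral_diff[OF int_ind int_ind])
  also have "\<dots> = K * (2 * b - 2 * a)"
    using ab by simp
  finally show ?thesis unfolding K_def by simp
qed

lemma Gf_zero: "Gf mu s 0 = 0" by (simp add: Gf_nonpos)

lemma Gf_lip: assumes s: "s > 0" and ab: "a \<le> b"
  shows "Gf mu s b - Gf mu s a \<le> 2 / sqrt (2 * pi * s\<^sup>2) * (b - a)"
proof (cases "a \<ge> 0")
  case True show ?thesis by (rule Gf_lip0[OF s True ab])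
next
  case False
  show ?thesis
  proof (cases "b \<ge> 0")
    case True
    have "Gf mu s b - Gf mu s 0 \<le> 2 / sqrt (2 * pi * s\<^sup>2) * (b - 0)"
      using Gf_lip0[OF s _ True] by simp
    moreover have "2 / sqrt (2 * pi * s\<^sup>2) * (b - 0) \<le> 2 / sqrt (2 * pi * s\<^sup>2) * (b - a)"
      using False by (intro mult_left_mono) auto
    moreover have "Gf mu s a = 0" "Gf mu s 0 = 0" using False by (auto simp: Gf_nonpos)
    ultimately show ?thesis by linarith
  next
    case False
    then show ?thesis using ab by (simp add: Gf_nonpos)
  qed
qed

lemma Gf_strict: assumes s: "s > 0" and ab: "0 \<le> a" "a < b"
  shows "Gf mu s a < Gf mu s b"
proof -
  define m where "m = 1 / sqrt (2 * pi * s\<^sup>2) * exp (- (b + \<bar>mu\<bar>)\<^sup>2 / (2 * s\<^sup>2))"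
  have m0: "m > 0" unfolding m_def using s by simp
  have "(\<integral>x. m * indicator {a<..<b} x \<partial>lborel) \<le> Gf mu s b - Gf mu s a"
    unfolding Gf_diff[OF s]
  proof (rule integral_mono)
    show "integrable lborel (\<lambda>x. normal_density mu s x * (indicator {- b<..<b} x - indicator {- a<..<a} x))"
      unfolding right_diff_distrib by (intro Bochner_Integration.integrable_diff int_nd s) auto
    show "integrable lborel (\<lambda>x. m * indicator {a<..<b} x)"
      using ab by (intro integrable_mult_right) auto
    fix x :: real
    show "m * indicator {a<..<b} x \<le> normal_density mu s x * (indicator {- b<..<b} x - indicator {- a<..<a} x)"
    proof (cases "x \<in> {a<..<b}")
      case True
      have "\<bar>x - mu\<bar> \<le> b + \<bar>mu\<bar>" using True ab by auto
      then have "(x - mu)\<^sup>2 \<le> (b + \<bar>mu\<bar>)\<^sup>2"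
        by (metis abs_ge_zero power2_abs power_mono)
      then have "exp (- (b + \<bar>mu\<bar>)\<^sup>2 / (2 * s\<^sup>2)) \<le> exp (- (x - mu)\<^sup>2 / (2 * s\<^sup>2))"
        using s by (simp add: divide_right_mono)
      then have "m \<le> normal_density mu s x"
        unfolding m_def normal_density_def by (simp add: divide_right_mono)
      then show ?thesis using True ab by (auto simp: indicator_def)
    next
      case False
      have "0 \<le> normal_density mu s x * (indicator {- b<..<b} x - indicator {- a<..<a} x)"
        using ind_le[of a b x] ab by (intro mult_nonneg_nonneg) auto
      then show ?thesis using False by simp
    qed
  qed
  moreover have "(\<integral>x. m * indicator {a<..<b} x \<partial>lborel) = m * (b - a)"
    using ab by simp
  moreover have "m * (b - a) > 0" using m0 ab by simp
  ultimately show ?thesis by linarith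
qed

lemma Gf_pos: "s > 0 \<Longrightarrow> b > 0 \<Longrightarrow> Gf mu s b > 0"
  using Gf_strict[of s 0 b mu] by (simp add: Gf_zero)



lemma int_Hf: assumes nu: "nu > 0" and s: "s > 0"
  shows "integrable (Ch nu) (Hf mu s nu t c)"
proof -
  interpret C: prob_space "Ch nu" by (rule Ch_prob[OF nu])
  show ?thesis
  proof (rule C.integrable_const_bound[where B=1])
    show "AE w in Ch nu. norm (Hf mu s nu t c w) \<le> 1"
      using Hf_bounds[OF s, of mu nu t c] by (intro AE_I2) simp
  qed (use s in measurable)
qed

lemma Ch_nonpos: assumes nu: "nu > 0" shows "emeasure (Ch nu) {..0} = 0"
proof -
  have "emeasure (Ch nu) {..0} = (\<integral>\<^sup>+w. ennreal (chi2_density nu w) * indicator {..0} w \<partial>lborel)"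
    unfolding Ch_def by (rule emeasure_density) auto
  also have "\<dots> = (\<integral>\<^sup>+(w::real). 0 \<partial>lborel)"
    by (rule nn_integral_cong) (auto simp: chi2_density_def indicator_def)
  finally show ?thesis by simp
qed

lemma Ch_pos: assumes nu: "nu > 0" shows "measure (Ch nu) {0<..} = 1"
proof -
  interpret C: prob_space "Ch nu" by (rule Ch_prob[OF nu])
  have "measure (Ch nu) (space (Ch nu) - {..0}) = 1 - measure (Ch nu) {..0}"
    by (rule C.prob_compl) simp
  moreover have "measure (Ch nu) {..0} = 0" using Ch_nonpos[OF nu] by (simp add: measure_def)
  moreover have "space (Ch nu) - {..0} = {0<..}" by auto
  ultimately show ?thesis by simp
qed

lemma omega0: assumes nu: "nu > 0" and s: "s > 0"
  shows "omega mu s nu 0 c = Gf mu s c"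
proof -
  interpret C: prob_space "Ch nu" by (rule Ch_prob[OF nu])
  have "omega mu s nu 0 c = (\<integral>w. Gf mu s c * indicator {0<..} w \<partial>Ch nu)"
    unfolding omega_int[OF nu s] by (rule Bochner_Integration.integral_cong) (auto simp: Hf_def indicator_def)
  also have "\<dots> = Gf mu s c * measure (Ch nu) {0<..}" by simp
  finally show ?thesis using Ch_pos[OF nu] by simp
qed

lemma Hf_mono: assumes s: "s > 0" and c: "c1 \<le> c2"
  shows "Hf mu s nu t c1 w \<le> Hf mu s nu t c2 w"
  unfolding Hf_def using c by (auto intro!: monoD[OF Gf_mono[OF s]])

lemma Hf_lip: assumes s: "s > 0" and c: "c1 \<le> c2"
  shows "Hf mu s nu t c2 w - Hf mu s nu t c1 w \<le> 2 / sqrt (2 * pi * s\<^sup>2) * (c2 - c1)"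
proof (cases "w > 0")
  case True
  then show ?thesis unfolding Hf_def using Gf_lip[OF s, of "c1 - t * (s * sqrt (w / nu))" "c2 - t * (s * sqrt (w / nu))" mu] c
    by simp
next
  case False
  then show ?thesis unfolding Hf_def using c by simp
qed

lemma omega_lip: assumes nu: "nu > 0" and s: "s > 0" and c: "c1 \<le> c2"
  shows "omega mu s nu t c2 - omega mu s nu t c1 \<le> 2 / sqrt (2 * pi * s\<^sup>2) * (c2 - c1)"
    and "omega mu s nu t c1 \<le> omega mu s nu t c2"
proof -
  interpret C: prob_space "Ch nu" by (rule Ch_prob[OF nu])
  have d: "omega mu s nu t c2 - omega mu s nu t c1 = (\<integral>w. Hf mu s nu t c2 w - Hf mu s nu t c1 w \<partial>Ch nu)"
    unfolding omega_int[OF nu s]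
    by (rule Bochner_Integration.integral_diff[symmetric]) (auto intro: int_Hf nu s)
  have "(\<integral>w. Hf mu s nu t c2 w - Hf mu s nu t c1 w \<partial>Ch nu) \<le> (\<integral>w. 2 / sqrt (2 * pi * s\<^sup>2) * (c2 - c1) \<partial>Ch nu)"
  proof (rule integral_mono)
    fix w :: real
    show "Hf mu s nu t c2 w - Hf mu s nu t c1 w \<le> 2 / sqrt (2 * pi * s\<^sup>2) * (c2 - c1)"
      by (rule Hf_lip[OF s c])
  qed (auto intro!: Bochner_Integration.integrable_diff int_Hf nu s)
  then show "omega mu s nu t c2 - omega mu s nu t c1 \<le> 2 / sqrt (2 * pi * s\<^sup>2) * (c2 - c1)"
    using C.prob_space unfolding d by simp
  have "0 \<le> (\<integral>w. Hf mu s nu t c2 w - Hf mu s nu t c1 w \<partial>Ch nu)"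
    by (rule Bochner_Integration.integral_nonneg) (use Hf_mono[OF s c] in auto)
  then show "omega mu s nu t c1 \<le> omega mu s nu t c2" unfolding d[symmetric] by simp
qed

lemma omega_le_Gf: assumes nu: "nu > 0" and s: "s > 0" and t: "t \<ge> 0"
  shows "omega mu s nu t c \<le> Gf mu s c"
proof -
  interpret C: prob_space "Ch nu" by (rule Ch_prob[OF nu])
  have "omega mu s nu t c \<le> (\<integral>w. Gf mu s c \<partial>Ch nu)"
    unfolding omega_int[OF nu s]
  proof (rule integral_mono)
    fix w :: real
    show "Hf mu s nu t c w \<le> Gf mu s c"
    proof (cases "w > 0")
      case True
      have "0 \<le> t * (s * sqrt (w / nu))" using t s nu True by simp
      then have "Gf mu s (c - t * (s * sqrt (w / nu))) \<le> Gf mu s c"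
        by (intro monoD[OF Gf_mono[OF s]]) simp
      then show ?thesis unfolding Hf_def using True by simp
    next
      case False
      then show ?thesis unfolding Hf_def using Gf_bounds[OF s, of mu c] by simp
    qed
  qed (auto intro: int_Hf nu s)
  then show ?thesis using C.prob_space by simp
qed



lemma omega_strict: assumes nu: "nu > 0" and s: "s > 0" and t: "t \<ge> 0"
  and c: "c1 < c2" "0 < c2"
  shows "omega mu s nu t c1 < omega mu s nu t c2"
proof (rule ccontr)
  assume ng: "\<not> ?thesis"
  interpret C: prob_space "Ch nu" by (rule Ch_prob[OF nu])
  define d where "d w = Hf mu s nu t c2 w - Hf mu s nu t c1 w" for w
  define \<delta> where "\<delta> = nu * (c2 / (t * s + 1))\<^sup>2"
  have tsp: "t * s + 1 > 0" using t s by (intro add_nonneg_pos mult_nonneg_nonneg) auto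
  have \<delta>0: "\<delta> > 0" unfolding \<delta>_def using nu c tsp by (intro mult_pos_pos) auto
  have dpos: "d w > 0" if w: "0 < w" "w < \<delta>" for w
  proof -
    define T where "T = t * (s * sqrt (w / nu))"
    have ts: "t * s \<ge> 0" using t s by simp
    have "w / nu < (c2 / (t * s + 1))\<^sup>2" using w nu unfolding \<delta>_def by (simp add: field_simps)
    then have sq: "sqrt (w / nu) < c2 / (t * s + 1)"
      using c ts by (metis real_sqrt_less_iff real_sqrt_abs abs_of_pos divide_pos_pos add_nonneg_pos zero_less_one power2_eq_square)
    have T0: "T \<ge> 0" unfolding T_def using t s nu w by simp
    have "T = (t * s) * sqrt (w / nu)" unfolding T_def by simp
    also have "\<dots> \<le> (t * s) * (c2 / (t * s + 1))" using sq ts by (intro mult_left_mono) auto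
    also have "\<dots> < c2" using c ts by (simp add: field_simps)
    finally have Tc: "T < c2" .
    have "Gf mu s (c1 - T) < Gf mu s (c2 - T)"
    proof (cases "c1 - T \<ge> 0")
      case True then show ?thesis using Gf_strict[OF s True, of "c2 - T" mu] c by simp
    next
      case False then show ?thesis using Gf_pos[OF s, of "c2 - T" mu] Tc by (simp add: Gf_nonpos)
    qed
    then show ?thesis unfolding d_def Hf_def T_def using w by simp
  qed
  have dint: "integrable (Ch nu) d"
    unfolding d_def by (intro Bochner_Integration.integrable_diff int_Hf nu s)
  have dnn: "AE w in Ch nu. 0 \<le> d w" unfolding d_def using Hf_mono[OF s, of c1 c2] c by simp
  have "(\<integral>w. d w \<partial>Ch nu) = omega mu s nu t c2 - omega mu s nu t c1"
    unfolding d_def omega_int[OF nu s] by (rule Bochner_Integration.integral_diff) (auto intro: int_Hf nu s)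
  moreover have "(\<integral>w. d w \<partial>Ch nu) \<ge> 0" using dnn by (simp add: integral_nonneg_AE)
  ultimately have "(\<integral>w. d w \<partial>Ch nu) = 0" using ng by simp
  then have "AE w in Ch nu. d w = 0" using integral_nonneg_eq_0_iff_AE[OF dint dnn] by simp
  then have "AE w in Ch nu. w \<notin> {0<..<\<delta>}" by eventually_elim (use dpos in force)
  then have "emeasure (Ch nu) {0<..<\<delta>} = 0"
    by (subst (asm) AE_iff_measurable[where N="{0<..<\<delta>}"]) auto
  moreover have "emeasure (Ch nu) {0<..<\<delta>} = (\<integral>\<^sup>+w. ennreal (chi2_density nu w) * indicator {0<..<\<delta>} w \<partial>lborel)"
    unfolding Ch_def by (rule emeasure_density) auto
  ultimately have z: "(\<integral>\<^sup>+w. ennreal (chi2_density nu w) * indicator {0<..<\<delta>} w \<partial>lborel) = 0"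
    by simp
  have "(\<integral>\<^sup>+w. ennreal (chi2_density nu w) * indicator {0<..<\<delta>} w \<partial>lborel) = 0
      \<longleftrightarrow> (AE w in lborel. ennreal (chi2_density nu w) * indicator {0<..<\<delta>} w = 0)"
    by (rule nn_integral_0_iff_AE) measurable
  with z have "AE w in lborel. ennreal (chi2_density nu w) * indicator {0<..<\<delta>} w = 0"
    by simp
  then have "AE w in lborel. w \<notin> {0<..<\<delta>}"
  proof eventually_elim
    case (elim w)
    show ?case
    proof
      assume w: "w \<in> {0<..<\<delta>}"
      have "chi2_density nu w > 0" unfolding chi2_density_def using w nu
        by (auto intro!: divide_pos_pos mult_pos_pos Gamma_real_pos)
      then show False using elim w by simp
    qed
  qed
  then have "emeasure lborel {0<..<\<delta>} = 0"
    by (subst (asm) AE_iff_measurable[where N="{0<..<\<delta>}"]) auto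
  then show False using \<delta>0 by simp
qed



lemma Rg_mono: "c1 \<le> c2 \<Longrightarrow> Rg s nu t c1 \<subseteq> Rg s nu t c2"
  unfolding Rg_def by auto

lemma omega_big: assumes nu: "nu > 0" and s: "s > 0" and al: "al < 1"
  shows "\<exists>n::nat. omega mu s nu t (real n) > al"
proof -
  interpret N: prob_space "Nm mu s" by (rule Nm_prob[OF s])
  interpret C: prob_space "Ch nu" by (rule Ch_prob[OF nu])
  interpret P: pair_prob_space "Nm mu s" "Ch nu" ..
  define A where "A n = Rg s nu t (real n)" for n :: nat
  have sets_eq: "sets (Nm mu s \<Otimes>\<^sub>M Ch nu) = sets (borel \<Otimes>\<^sub>M borel)"
    by (rule sets_pair_measure_cong) (simp_all only: sets_Nm sets_Ch)
  have As: "range A \<subseteq> sets (Nm mu s \<Otimes>\<^sub>M Ch nu)"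
    unfolding sets_eq A_def using Rg_sets by auto
  have inc: "incseq A" unfolding A_def incseq_def by (auto intro!: Rg_mono)
  have U: "(\<Union>n. A n) = UNIV \<times> {0<..}"
  proof (intro set_eqI iffI)
    fix z assume "z \<in> (\<Union>n. A n)" then show "z \<in> UNIV \<times> {0<..}" by (auto simp: A_def Rg_def)
  next
    fix z :: "real \<times> real" assume z: "z \<in> UNIV \<times> {0<..}"
    obtain x w :: real where zxw: "z = (x, w)" by (cases z)
    have w: "w > 0" using z zxw by simp
    obtain n :: nat where n: "\<bar>x\<bar> + t * (s * sqrt (w / nu)) < real n" using reals_Archimedean2 by blast
    then have "(x, w) \<in> A n" using w unfolding A_def Rg_def by auto
    then show "z \<in> (\<Union>n. A n)" using zxw by blast
  qed
  have "emeasure (Nm mu s \<Otimes>\<^sub>M Ch nu) (UNIV \<times> {0<..}) = emeasure (Nm mu s) UNIV * emeasure (Ch nu) {0<..}"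
    by (rule C.emeasure_pair_measure_Times) auto
  also have "\<dots> = 1"
    using Ch_pos[OF nu] N.emeasure_space_1 by (simp add: C.emeasure_eq_measure)
  finally have m1: "measure (Nm mu s \<Otimes>\<^sub>M Ch nu) (\<Union>n. A n) = 1" unfolding U by (simp add: measure_def)
  have "(\<lambda>n. measure (Nm mu s \<Otimes>\<^sub>M Ch nu) (A n)) \<longlonglongrightarrow> 1"
    using P.finite_Lim_measure_incseq[OF As inc] unfolding m1 .
  then have "eventually (\<lambda>n. al < measure (Nm mu s \<Otimes>\<^sub>M Ch nu) (A n)) sequentially"
    using al by (rule order_tendstoD(1))
  then obtain n where "al < measure (Nm mu s \<Otimes>\<^sub>M Ch nu) (A n)"
    by (auto simp: eventually_sequentially)
  then show ?thesis unfolding A_def omega_prod[OF nu, symmetric] by blast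
qed

lemma crit_ex: assumes nu: "nu > 0" and s: "s > 0" and t: "t \<ge> 0" and al: "0 < al" "al < 1"
  shows "\<exists>!c. c > 0 \<and> omega mu s nu t c = al"
proof -
  define L where "L = 2 / sqrt (2 * pi * s\<^sup>2)"
  have L0: "L > 0" unfolding L_def using s by simp
  define c1 where "c1 = al / (2 * L)"
  have c10: "c1 > 0" unfolding c1_def using L0 al by simp
  have "omega mu s nu t c1 \<le> Gf mu s c1" by (rule omega_le_Gf[OF nu s t])
  also have "\<dots> = Gf mu s c1 - Gf mu s 0" by (simp add: Gf_zero)
  also have "\<dots> \<le> L * (c1 - 0)" unfolding L_def using c10 by (intro Gf_lip[OF s]) simp
  also have "\<dots> = al / 2" unfolding c1_def using L0 by simp
  finally have o1: "omega mu s nu t c1 < al" using al by simp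
  obtain n :: nat where on: "omega mu s nu t (real n) > al" using omega_big[OF nu s al(2)] by blast
  have c1n: "c1 \<le> real n"
  proof (rule ccontr)
    assume "\<not> c1 \<le> real n"
    then have "omega mu s nu t (real n) \<le> omega mu s nu t c1" using omega_lip(2)[OF nu s, of "real n" c1] by simp
    then show False using o1 on by simp
  qed
  have cont: "continuous_on {c1..real n} (omega mu s nu t)"
  proof (rule lipschitz_on_continuous_on)
    show "L-lipschitz_on {c1..real n} (omega mu s nu t)"
    proof (rule lipschitz_onI)
      fix x y assume "x \<in> {c1..real n}" "y \<in> {c1..real n}"
      show "dist (omega mu s nu t x) (omega mu s nu t y) \<le> L * dist x y"
      proof (cases "x \<le> y")
        case True
        then show ?thesis using omega_lip[OF nu s True, of mu t] unfolding L_def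
          by (simp add: dist_real_def abs_if)
      next
        case False
        then have yx: "y \<le> x" by simp
        then show ?thesis using omega_lip[OF nu s yx, of mu t] False unfolding L_def
          by (simp add: dist_real_def abs_if)
      qed
    qed (use L0 in simp)
  qed
  obtain c where c: "c1 \<le> c" "c \<le> real n" "omega mu s nu t c = al"
    using IVT'[of "omega mu s nu t" c1 al "real n", OF _ _ c1n cont] o1 on by auto
  show ?thesis
  proof (rule ex1I[where a=c])
    show "c > 0 \<and> omega mu s nu t c = al" using c c10 by simp
  next
    fix c' assume c': "c' > 0 \<and> omega mu s nu t c' = al"
    show "c' = c"
    proof (rule ccontr)
      assume "c' \<noteq> c"
      then consider "c' < c" | "c < c'" by linarith
      then show False
      proof cases
        case 1
        have "omega mu s nu t c' < omega mu s nu t c"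
          by (rule omega_strict[OF nu s t 1]) (use c c10 in linarith)
        then show False using c c' by simp
      next
        case 2
        have "omega mu s nu t c < omega mu s nu t c'"
          by (rule omega_strict[OF nu s t 2]) (use c' in linarith)
        then show False using c c' by simp
      qed
    qed
  qed
qed

lemma crit_prop: assumes nu: "nu > 0" and s: "s > 0" and t: "t \<ge> 0" and al: "0 < al" "al < 1"
  shows "crit mu s al nu t > 0 \<and> omega mu s nu t (crit mu s al nu t) = al"
  unfolding crit_def by (rule theI'[OF crit_ex[OF nu s t al]])



theorem theorem1:
  fixes c0 alpha0 nu2 sigma1 t theta :: real
  assumes "c0 > 0" and "0 < alpha0" and "alpha0 < 1/2" and "nu2 > 0" and "sigma1 > 0"
    and "t > 0" and "- c0 < theta" and "theta < c0"
  shows "omega theta sigma1 nu2 t (crit c0 sigma1 alpha0 nu2 t)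
           \<le> omega theta sigma1 nu2 0 (crit c0 sigma1 alpha0 nu2 0)"
proof -
  note nu = \<open>nu2 > 0\<close> and s = \<open>sigma1 > 0\<close>
  have al: "0 < alpha0" "alpha0 < 1" using assms by auto
  have t0: "t \<ge> 0" using assms by simp
  define a0 where "a0 = crit c0 sigma1 alpha0 nu2 0"
  define ct where "ct = crit c0 sigma1 alpha0 nu2 t"
  have A0: "a0 > 0" "omega c0 sigma1 nu2 0 a0 = alpha0"
    using crit_prop[OF nu s order_refl al, of c0] unfolding a0_def by auto
  have At: "omega c0 sigma1 nu2 t ct = alpha0"
    using crit_prop[OF nu s t0 al, of c0] unfolding ct_def by auto
  have Ga: "Gf c0 sigma1 a0 = alpha0" using A0(2) omega0[OF nu s] by simp
  have th: "\<bar>theta\<bar> \<le> c0" using assms by auto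
  define k where "k = psi theta sigma1 a0 / psi c0 sigma1 a0"
  define K where "K = Gf theta sigma1 a0 - k * Gf c0 sigma1 a0"
  interpret C: prob_space "Ch nu2" by (rule Ch_prob[OF nu])
  have pw: "Hf theta sigma1 nu2 t ct w - k * Hf c0 sigma1 nu2 t ct w \<le> K" for w
  proof -
    define aw where "aw = (if w > 0 then ct - t * (sigma1 * sqrt (w / nu2)) else 0)"
    have "Hf mu sigma1 nu2 t ct w = Gf mu sigma1 aw" for mu
      unfolding Hf_def aw_def by (simp add: Gf_zero)
    then show ?thesis unfolding K_def k_def using F_le[OF s th, of a0 aw] A0(1) by simp
  qed
  have "(\<integral>w. Hf theta sigma1 nu2 t ct w - k * Hf c0 sigma1 nu2 t ct w \<partial>Ch nu2) \<le> (\<integral>w. K \<partial>Ch nu2)"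
  proof (rule integral_mono)
    fix w :: real
    show "Hf theta sigma1 nu2 t ct w - k * Hf c0 sigma1 nu2 t ct w \<le> K" by (rule pw)
  qed (auto intro!: Bochner_Integration.integrable_diff integrable_mult_right int_Hf nu s)
  moreover have "(\<integral>w. Hf theta sigma1 nu2 t ct w - k * Hf c0 sigma1 nu2 t ct w \<partial>Ch nu2)
      = omega theta sigma1 nu2 t ct - k * omega c0 sigma1 nu2 t ct"
    unfolding omega_int[OF nu s]
    by (subst Bochner_Integration.integral_diff) (auto intro!: integrable_mult_right int_Hf nu s)
  moreover have "(\<integral>w. K \<partial>Ch nu2) = K" using C.prob_space by simp
  ultimately have h: "omega theta sigma1 nu2 t ct - k * omega c0 sigma1 nu2 t ct \<le> K" by linarith
  then have "omega theta sigma1 nu2 t ct \<le> K + k * alpha0" unfolding At by linarith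
  also have "\<dots> = Gf theta sigma1 a0" unfolding K_def Ga by simp
  also have "\<dots> = omega theta sigma1 nu2 0 a0" using omega0[OF nu s] by simp
  finally show ?thesis unfolding ct_def a0_def .
qed


end
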